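(* Let $n\ge 2$, let $\mathbf X=(X_1,\dots,X_n)$ be a random vector whose marginals are uniform on $[0,1]$, let $C$ be its $n$-copula, and let $\alpha\in\{-1,1\}^n$. Let $I=\{i:\alpha_i=-1\}$ and $J=\{1,\dots,n\}\setminus I=\{i:\alpha_i=1\}$. Then $$\rho_n^\alpha(C)=\frac{2^n(n+1)}{2^n-(n+1)}\sum_{S\subseteq J}(-1)^{|S|}\,\frac{2^{|I|+|S|}-(|I|+|S|+1)}{2^{|I|+|S|}(|I|+|S|+1)}\,\rho^-_{\mathbf X_{I\cup S}},$$ where the terms with $|I\cup S|\le 1$ are taken to be $0$ (their coefficient $2^m-(m+1)$ vanishes for $m\in\{0,1\}$).
   Context: For $\alpha\in\{-1,1\}^n$ and $\mathbf X$ with uniform $[0,1]$ marginals and copula $C$: $Q_\alpha(u)=\mathbb P\big[\bigcap_{i=1}^n\{\alpha_iX_i>\alpha_iu_i\}\big]-\prod_{i=1}^n\mathbb P[\alpha_iX_i>\alpha_iu_i]$ and $\rho_n^\alpha(C)=\frac{2^n(n+1)}{2^n-(n+1)}\int_{[0,1]^n}Q_\alpha(u)\,du$. For $K\subseteq\{1,\dots,n\}$ with $k=|K|\ge 2$, $\mathbf X_K=(X_i)_{i\in K}$, $C_K$ denotes its $k$-copula (the $K$-marginal of $C$, i.e. $C$ with the arguments outside $K$ set to $1$), and $\rho^-_{\mathbf X_K}=\frac{k+1}{2^k-(k+1)}\Big(2^k\int_{[0,1]^k}C_K(\mathbf u)\,d\mathbf u-1\Big)$ (equivalently $\rho_k^{(-1,\dots,-1)}(C_K)$).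 *)

theory Defs
  imports "HOL-Probability.Probability"
begin

definition unit_cube :: "nat set \<Rightarrow> (nat \<Rightarrow> real) measure" where
  "unit_cube K = PiM K (\<lambda>_. restrict_space lborel {0..1::real})"

definition Q_alpha :: "'a measure \<Rightarrow> (nat \<Rightarrow> 'a \<Rightarrow> real) \<Rightarrow> nat \<Rightarrow> (nat \<Rightarrow> real)
    \<Rightarrow> (nat \<Rightarrow> real) \<Rightarrow> real" where
  "Q_alpha M X n \<alpha> u =
     measure M {\<omega> \<in> space M. \<forall>i<n. \<alpha> i * X i \<omega> > \<alpha> i * u i}
     - (\<Prod>i<n. measure M {\<omega> \<in> space M. \<alpha> i * X i \<omega> > \<alpha> i * u i})"

definition rho_alpha :: "'a measure \<Rightarrow> (nat \<Rightarrow> 'a \<Rightarrow> real) \<Rightarrow> nat \<Rightarrow> (nat \<Rightarrow> real) \<Rightarrow> real" where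
  "rho_alpha M X n \<alpha> =
     (2^n * (real n + 1)) / (2^n - (real n + 1)) *
     (LINT u | unit_cube {..<n}. Q_alpha M X n \<alpha> u)"

text \<open>The K-marginal copula C_K(u) = P[X_i <= u_i for all i in K] (uniform marginals).\<close>
definition copula_marg :: "'a measure \<Rightarrow> (nat \<Rightarrow> 'a \<Rightarrow> real) \<Rightarrow> nat set \<Rightarrow> (nat \<Rightarrow> real) \<Rightarrow> real" where
  "copula_marg M X K u = measure M {\<omega> \<in> space M. \<forall>i\<in>K. X i \<omega> \<le> u i}"

definition rho_minus :: "'a measure \<Rightarrow> (nat \<Rightarrow> 'a \<Rightarrow> real) \<Rightarrow> nat set \<Rightarrow> real" where
  "rho_minus M X K =
     (real (card K) + 1) / (2 ^ card K - (real (card K) + 1)) *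
     (2 ^ card K * (LINT u | unit_cube K. copula_marg M X K u) - 1)"

end

theory Submission
  imports Defs
begin


lemma unif_meas:
  assumes "f \<in> borel_measurable M" "distr M lborel f = uniform_measure lborel {0..1::real}"
    "B \<in> sets borel"
  shows "measure M {\<omega> \<in> space M. f \<omega> \<in> B} = measure lborel ({0..1} \<inter> B)"
proof -
  have "measure M {\<omega> \<in> space M. f \<omega> \<in> B} = measure (distr M lborel f) B"
    using assms by (subst measure_distr) (auto intro!: arg_cong[where f="measure M"])
  also have "\<dots> = measure lborel ({0..1} \<inter> B)"
    using assms by (subst assms(2)) (simp add: emeasure_lborel_Icc)
  finally show ?thesis .
qed

lemma unif_le:
  assumes "f \<in> borel_measurable M" "distr M lborel f = uniform_measure lborel {0..1::real}"
    "t \<in> {0..1}"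
  shows "measure M {\<omega> \<in> space M. f \<omega> \<le> t} = t"
    "measure M {\<omega> \<in> space M. f \<omega> < t} = t"
    "measure M {\<omega> \<in> space M. f \<omega> > t} = 1 - t"
    "measure M {\<omega> \<in> space M. f \<omega> = t} = 0"
proof -
  have "measure M {\<omega> \<in> space M. f \<omega> \<in> {..t}} = measure lborel ({0..1} \<inter> {..t})"
    by (rule unif_meas[OF assms(1,2)]) auto
  also have "{0..1} \<inter> {..t} = {0..t}" using assms(3) by auto
  finally show "measure M {\<omega> \<in> space M. f \<omega> \<le> t} = t" using assms(3) by simp
  have "measure M {\<omega> \<in> space M. f \<omega> \<in> {..<t}} = measure lborel ({0..1} \<inter> {..<t})"
    by (rule unif_meas[OF assms(1,2)]) auto
  also have "{0..1} \<inter> {..<t} = {0..<t}" using assms(3) by auto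
  finally show "measure M {\<omega> \<in> space M. f \<omega> < t} = t" using assms(3) by simp
  have "measure M {\<omega> \<in> space M. f \<omega> \<in> {t<..}} = measure lborel ({0..1} \<inter> {t<..})"
    by (rule unif_meas[OF assms(1,2)]) auto
  also have "{0..1} \<inter> {t<..} = {t<..1}" using assms(3) by auto
  finally show "measure M {\<omega> \<in> space M. f \<omega> > t} = 1 - t" using assms(3) by simp
  have "measure M {\<omega> \<in> space M. f \<omega> \<in> {t}} = measure lborel ({0..1} \<inter> {t})"
    by (rule unif_meas[OF assms(1,2)]) auto
  also have "{0..1} \<inter> {t} = {t..t}" using assms(3) by auto
  finally show "measure M {\<omega> \<in> space M. f \<omega> = t} = 0" by simp
qed


lemma prod01: "finite K \<Longrightarrow> (\<Prod>i\<in>K. if P i then 1 else (0::real)) = (if \<forall>i\<in>K. P i then 1 else 0)"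
  by (induct rule: finite_induct) auto

lemma prod_1_minus:
  fixes g :: "nat \<Rightarrow> real"
  assumes "finite J"
  shows "(\<Prod>j\<in>J. 1 - g j) = (\<Sum>S\<in>Pow J. (-1) ^ card S * (\<Prod>j\<in>S. g j))"
proof -
  have "(\<Prod>j\<in>J. 1 - g j) = (\<Prod>j\<in>J. (- g j) + 1)" by simp
  also have "\<dots> = (\<Sum>S\<in>Pow J. (\<Prod>j\<in>S. - g j) * (\<Prod>j\<in>J-S. 1))"
    by (rule prod_add[OF assms])
  also have "\<dots> = (\<Sum>S\<in>Pow J. (-1) ^ card S * (\<Prod>j\<in>S. g j))"
    by (intro sum.cong refl) (simp add: prod_uminus)
  finally show ?thesis .
qed

lemma Q_pointwise:
  fixes M :: "'a measure" and X :: "nat \<Rightarrow> 'a \<Rightarrow> real" and \<alpha> :: "nat \<Rightarrow> real"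
  assumes PS: "prob_space M"
    and Xm: "\<And>i. i < n \<Longrightarrow> X i \<in> borel_measurable M"
    and Xd: "\<And>i. i < n \<Longrightarrow> distr M lborel (X i) = uniform_measure lborel {0..1}"
    and al: "\<And>i. i < n \<Longrightarrow> \<alpha> i \<in> {-1, 1}"
    and u: "\<And>i. i < n \<Longrightarrow> u i \<in> {0..1}"
  defines "I \<equiv> {i. i < n \<and> \<alpha> i = -1}" and "J \<equiv> {i. i < n \<and> \<alpha> i = 1}"
  shows "Q_alpha M X n \<alpha> u = (\<Sum>S\<in>Pow J. (-1) ^ card S * copula_marg M X (I \<union> S) u)
           - (\<Prod>i<n. if \<alpha> i = -1 then u i else 1 - u i)"
proof -
  interpret prob_space M by fact
  have fin: "finite I" "finite J" unfolding I_def J_def by auto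
  have IJ: "I \<inter> J = {}" "I \<union> J = {..<n}" using al unfolding I_def J_def by force+
  have P2: "(\<Prod>i<n. measure M {\<omega> \<in> space M. \<alpha> i * X i \<omega> > \<alpha> i * u i})
      = (\<Prod>i<n. if \<alpha> i = -1 then u i else 1 - u i)"
  proof (rule prod.cong[OF refl])
    fix i assume "i \<in> {..<n}"
    then have i: "i < n" by simp
    show "measure M {\<omega> \<in> space M. \<alpha> i * X i \<omega> > \<alpha> i * u i} = (if \<alpha> i = -1 then u i else 1 - u i)"
    proof (cases "\<alpha> i = -1")
      case True
      then show ?thesis using unif_le(2)[OF Xm[OF i] Xd[OF i] u[OF i]] by simp
    next
      case False
      then have "\<alpha> i = 1" using al[OF i] by auto
      then show ?thesis using unif_le(3)[OF Xm[OF i] Xd[OF i] u[OF i]] by simp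
    qed
  qed
  define F where "F K = {\<omega> \<in> space M. \<forall>i\<in>K. X i \<omega> \<le> u i}" for K
  define E where "E = {\<omega> \<in> space M. \<forall>i<n. \<alpha> i * X i \<omega> > \<alpha> i * u i}"
  have FS: "F K \<in> sets M" if "K \<subseteq> {..<n}" for K
  proof -
    have "finite K" using that finite_subset by blast
    show ?thesis unfolding F_def
    proof (rule sets.sets_Collect_finite_All[OF _ \<open>finite K\<close>])
      fix i assume "i \<in> K"
      then have [measurable]: "X i \<in> borel_measurable M" using that Xm by auto
      show "{\<omega> \<in> space M. X i \<omega> \<le> u i} \<in> sets M" by measurable
    qed
  qed
  have ES: "E \<in> sets M"
  proof -
    have "E = {\<omega> \<in> space M. \<forall>i\<in>{..<n}. \<alpha> i * X i \<omega> > \<alpha> i * u i}" by (auto simp: E_def)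
    also have "\<dots> \<in> sets M"
    proof (rule sets.sets_Collect_finite_All)
      fix i assume "i \<in> {..<n}"
      then have [measurable]: "X i \<in> borel_measurable M" using Xm by auto
      show "{\<omega> \<in> space M. \<alpha> i * X i \<omega> > \<alpha> i * u i} \<in> sets M" by measurable
    qed simp
    finally show ?thesis .
  qed
  have AEne: "AE \<omega> in M. \<forall>i\<in>{..<n}. X i \<omega> \<noteq> u i"
  proof (subst AE_finite_all)
    show "finite {..<n}" by simp
    show "\<forall>i\<in>{..<n}. AE \<omega> in M. X i \<omega> \<noteq> u i"
    proof
      fix i assume "i \<in> {..<n}"
      then have i: "i < n" by simp
      have S: "{\<omega> \<in> space M. X i \<omega> = u i} \<in> sets M" using Xm[OF i] by measurable
      have "measure M {\<omega> \<in> space M. X i \<omega> = u i} = 0" using unif_le(4)[OF Xm[OF i] Xd[OF i] u[OF i]] .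
      then have "{\<omega> \<in> space M. X i \<omega> = u i} \<in> null_sets M"
        using S by (simp add: emeasure_eq_measure null_setsI)
      then show "AE \<omega> in M. X i \<omega> \<noteq> u i"
        by (rule AE_I') auto
    qed
  qed
  have pw: "(indicator E \<omega> :: real) = (\<Sum>S\<in>Pow J. (-1) ^ card S * indicator (F (I \<union> S)) \<omega>)"
    if \<omega>: "\<omega> \<in> space M" "\<forall>i\<in>{..<n}. X i \<omega> \<noteq> u i" for \<omega>
  proof -
    define g where "g i = (if X i \<omega> \<le> u i then 1 else (0::real))" for i
    have "indicator E \<omega> = (\<Prod>i<n. if \<alpha> i * X i \<omega> > \<alpha> i * u i then 1 else (0::real))"
      by (subst prod01) (auto simp: E_def \<omega> indicator_def)
    also have "\<dots> = (\<Prod>i\<in>I \<union> J. if \<alpha> i * X i \<omega> > \<alpha> i * u i then 1 else (0::real))"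
      using IJ by simp
    also have "\<dots> = (\<Prod>i\<in>I. if \<alpha> i * X i \<omega> > \<alpha> i * u i then 1 else (0::real)) *
                    (\<Prod>i\<in>J. if \<alpha> i * X i \<omega> > \<alpha> i * u i then 1 else (0::real))"
      by (rule prod.union_disjoint) (use fin IJ in auto)
    also have "(\<Prod>i\<in>I. if \<alpha> i * X i \<omega> > \<alpha> i * u i then 1 else (0::real)) = (\<Prod>i\<in>I. g i)"
      using \<omega>(2) by (intro prod.cong refl) (auto simp: I_def g_def)
    also have "(\<Prod>i\<in>J. if \<alpha> i * X i \<omega> > \<alpha> i * u i then 1 else (0::real)) = (\<Prod>i\<in>J. 1 - g i)"
      using \<omega>(2) by (intro prod.cong refl) (auto simp: J_def g_def)
    also have "\<dots> = (\<Sum>S\<in>Pow J. (-1) ^ card S * (\<Prod>j\<in>S. g j))"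
      by (rule prod_1_minus[OF fin(2)])
    also have "(\<Prod>i\<in>I. g i) * \<dots> = (\<Sum>S\<in>Pow J. (-1) ^ card S * ((\<Prod>i\<in>I. g i) * (\<Prod>j\<in>S. g j)))"
      by (simp add: sum_distrib_left mult.left_commute)
    also have "\<dots> = (\<Sum>S\<in>Pow J. (-1) ^ card S * indicator (F (I \<union> S)) \<omega>)"
    proof (intro sum.cong refl arg_cong2[where f="(*)"])
      fix S assume "S \<in> Pow J"
      then have S: "S \<subseteq> J" "finite S" using fin finite_subset by auto
      have "(\<Prod>i\<in>I. g i) * (\<Prod>j\<in>S. g j) = (\<Prod>i\<in>I \<union> S. g i)"
        by (rule prod.union_disjoint[symmetric]) (use S fin IJ in auto)
      also have "\<dots> = indicator (F (I \<union> S)) \<omega>"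
        unfolding g_def by (subst prod01) (use S fin \<omega> in \<open>auto simp: F_def indicator_def\<close>)
      finally show "(\<Prod>i\<in>I. g i) * (\<Prod>j\<in>S. g j) = indicator (F (I \<union> S)) \<omega>" .
    qed
    finally show ?thesis .
  qed
  have FIS: "F (I \<union> S) \<in> sets M" if "S \<in> Pow J" for S
    by (rule FS) (use that IJ in auto)
  have "measure M E = integral\<^sup>L M (indicator E)"
    using ES by simp
  also have "\<dots> = integral\<^sup>L M (\<lambda>\<omega>. \<Sum>S\<in>Pow J. (-1) ^ card S * indicator (F (I \<union> S)) \<omega>)"
  proof (rule integral_cong_AE)
    show "indicator E \<in> borel_measurable M" using ES by simp
    show "(\<lambda>\<omega>. \<Sum>S\<in>Pow J. (-1) ^ card S * indicator (F (I \<union> S)) \<omega> :: real) \<in> borel_measurable M"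
      using FIS by (intro borel_measurable_sum borel_measurable_times borel_measurable_const borel_measurable_indicator) auto
    show "AE \<omega> in M. (indicator E \<omega> :: real) = (\<Sum>S\<in>Pow J. (-1) ^ card S * indicator (F (I \<union> S)) \<omega>)"
      using AEne AE_space by eventually_elim (rule pw; assumption)
  qed
  also have "\<dots> = (\<Sum>S\<in>Pow J. integral\<^sup>L M (\<lambda>\<omega>. (-1) ^ card S * indicator (F (I \<union> S)) \<omega>))"
    by (rule Bochner_Integration.integral_sum) (use FIS in \<open>auto intro!: integrable_real_indicator simp: emeasure_eq_measure\<close>)
  also have "\<dots> = (\<Sum>S\<in>Pow J. (-1) ^ card S * copula_marg M X (I \<union> S) u)"
    using FIS by (intro sum.cong refl) (simp add: copula_marg_def F_def[symmetric])
  finally have P1: "measure M E = (\<Sum>S\<in>Pow J. (-1) ^ card S * copula_marg M X (I \<union> S) u)" .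
  show ?thesis unfolding Q_alpha_def P1[unfolded E_def] P2 ..
qed



abbreviation "R01 \<equiv> restrict_space lborel {0..1::real}"

lemma prob_R01: "prob_space R01"
  by (rule prob_space_restrict_space) (auto simp: emeasure_lborel_Icc)

lemma pps_R01: "product_prob_space (\<lambda>_. R01)"
  unfolding product_prob_space_def product_prob_space_axioms_def product_sigma_finite_def
  by (simp add: prob_space_imp_sigma_finite prob_space_restrict_space)

lemma psf_R01: "product_sigma_finite (\<lambda>_. R01)"
  using pps_R01 unfolding product_prob_space_def by blast

lemma prob_cube: "prob_space (unit_cube K)"
  unfolding unit_cube_def by (rule prob_space_PiM) (rule prob_R01)

lemma space_cube: "space (unit_cube K) = PiE K (\<lambda>_. {0..1})"
  unfolding unit_cube_def by (simp add: space_PiM)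

lemma comp_meas: "i \<in> K \<Longrightarrow> (\<lambda>u. u i) \<in> borel_measurable (unit_cube K)"
proof -
  assume i: "i \<in> K"
  have "(\<lambda>u. u i) \<in> measurable (PiM K (\<lambda>_. R01)) R01" by (rule measurable_component_singleton[OF i])
  moreover have "(\<lambda>x. x) \<in> measurable R01 borel" by (rule measurable_restrict_space1) simp
  ultimately show ?thesis unfolding unit_cube_def by (rule measurable_compose)
qed

lemma int_R01_poly:
  fixes a b :: real
  shows "integral\<^sup>L R01 (\<lambda>x. a + b * x) = a + b / 2"
proof -
  have "integral\<^sup>L R01 (\<lambda>x. a + b * x) = (\<integral>x. indicator {0..1} x *\<^sub>R (a + b * x) \<partial>lborel)"
    by (rule integral_restrict_space) auto
  also have "\<dots> = (\<integral>x. a * (x^0 * indicator {0..1} x) + b * (x^1 * indicator {0..1} x) \<partial>lborel)"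
    by (rule Bochner_Integration.integral_cong) (auto simp: algebra_simps indicator_def)
  also have "\<dots> = a * (\<integral>x. x^0 * indicator {0..1} x \<partial>lborel) + b * (\<integral>x. x^1 * indicator {0..1} x \<partial>lborel)"
  proof -
    have i: "integrable lborel (\<lambda>x. x^k * indicator {0..1} x :: real)" for k
    proof -
      have "set_integrable lborel {0..1} (\<lambda>x. x^k :: real)"
        by (rule borel_integrable_atLeastAtMost') (intro continuous_intros)
      then show ?thesis unfolding set_integrable_def by (simp add: mult.commute)
    qed
    show ?thesis
      using i[of 1] by (subst Bochner_Integration.integral_add) (auto intro!: i)
  qed
  also have "\<dots> = a + b / 2"
    by (simp only: integral_power) simp
  finally show ?thesis .
qed

lemma integrable_R01:
  fixes f :: "real \<Rightarrow> real"
  assumes "f \<in> borel_measurable borel" "\<And>x. x \<in> {0..1} \<Longrightarrow> \<bar>f x\<bar> \<le> B"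
  shows "integrable R01 f"
proof -
  interpret prob_space R01 by (rule prob_R01)
  show ?thesis
    by (rule integrable_const_bound[where B=B])
       (use assms in \<open>auto simp: AE_restrict_space_iff intro!: measurable_restrict_space1\<close>)
qed

lemma cube_prod:
  fixes f :: "nat \<Rightarrow> real \<Rightarrow> real"
  assumes "finite K" "\<And>i. i \<in> K \<Longrightarrow> integrable R01 (f i)"
  shows "(\<integral>u. (\<Prod>i\<in>K. f i (u i)) \<partial>unit_cube K) = (\<Prod>i\<in>K. integral\<^sup>L R01 (f i))"
proof -
  interpret product_sigma_finite "\<lambda>_. R01" by (rule psf_R01)
  show ?thesis unfolding unit_cube_def by (rule product_integral_prod[OF assms])
qed

lemma cube_restrict:
  fixes f :: "(nat \<Rightarrow> real) \<Rightarrow> real"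
  assumes "K \<subseteq> L" "finite L" "f \<in> borel_measurable (unit_cube K)"
  shows "(\<integral>u. f (restrict u K) \<partial>unit_cube L) = integral\<^sup>L (unit_cube K) f"
proof -
  interpret product_prob_space "\<lambda>_. R01" by (rule pps_R01)
  have "unit_cube K = distr (unit_cube L) (unit_cube K) (\<lambda>f. restrict f K)"
    unfolding unit_cube_def by (rule distr_restrict[OF assms(1,2)])
  then have "integral\<^sup>L (unit_cube K) f = integral\<^sup>L (distr (unit_cube L) (unit_cube K) (\<lambda>f. restrict f K)) f"
    by simp
  also have "\<dots> = (\<integral>u. f (restrict u K) \<partial>unit_cube L)"
    by (rule integral_distr) (use assms in \<open>auto simp: unit_cube_def intro: measurable_restrict_subset\<close>)
  finally show ?thesis by simp
qed



lemma cm_meas: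
  assumes "prob_space M" "\<And>i. i\<in>K \<Longrightarrow> X i \<in> borel_measurable M" "finite K"
    "\<And>i. i\<in>K \<Longrightarrow> (\<lambda>u. u i) \<in> borel_measurable N"
  shows "(\<lambda>u. copula_marg M X K u) \<in> borel_measurable N"
proof -
  interpret prob_space M by fact
  let ?Q = "{p \<in> space (N \<Otimes>\<^sub>M M). \<forall>i\<in>K. X i (snd p) \<le> fst p i}"
  have Q: "?Q \<in> sets (N \<Otimes>\<^sub>M M)"
  proof (rule sets.sets_Collect_finite_All[OF _ assms(3)])
    fix i assume i: "i \<in> K"
    have [measurable]: "X i \<in> borel_measurable M" "(\<lambda>u. u i) \<in> borel_measurable N" using i assms by auto
    show "{p \<in> space (N \<Otimes>\<^sub>M M). X i (snd p) \<le> fst p i} \<in> sets (N \<Otimes>\<^sub>M M)"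
      by measurable
  qed
  have meas: "(\<lambda>u. enn2real (emeasure M (Pair u -` ?Q))) \<in> borel_measurable N"
    by (intro borel_measurable_enn2real measurable_emeasure_Pair Q)
  have eq: "enn2real (emeasure M (Pair u -` ?Q)) = copula_marg M X K u" if u: "u \<in> space N" for u
  proof -
    have "Pair u -` ?Q = {\<omega> \<in> space M. \<forall>i\<in>K. X i \<omega> \<le> u i}"
      using u by (simp add: space_pair_measure set_eq_iff)
    then show ?thesis unfolding copula_marg_def measure_def by simp
  qed
  show ?thesis using measurable_cong[THEN iffD1, OF eq meas] by simp
qed

lemma cm_integrable:
  assumes "prob_space M" "\<And>i. i\<in>K \<Longrightarrow> X i \<in> borel_measurable M" "K \<subseteq> L" "finite L"
  shows "integrable (unit_cube L) (copula_marg M X K)"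
proof -
  interpret C: prob_space "unit_cube L" by (rule prob_cube)
  interpret prob_space M by fact
  show ?thesis
  proof (rule C.integrable_const_bound[where B=1])
    show "AE x in unit_cube L. norm (copula_marg M X K x) \<le> 1"
      by (simp add: copula_marg_def)
    show "copula_marg M X K \<in> borel_measurable (unit_cube L)"
      by (rule cm_meas[OF assms(1,2)]) (use assms finite_subset comp_meas in auto)
  qed
qed

lemma cm_cube:
  assumes "prob_space M" "\<And>i. i\<in>K \<Longrightarrow> X i \<in> borel_measurable M" "K \<subseteq> L" "finite L"
  shows "integral\<^sup>L (unit_cube L) (copula_marg M X K) = integral\<^sup>L (unit_cube K) (copula_marg M X K)"
proof -
  have "integral\<^sup>L (unit_cube L) (copula_marg M X K) = (\<integral>u. copula_marg M X K (restrict u K) \<partial>unit_cube L)"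
    by (rule Bochner_Integration.integral_cong) (auto simp: copula_marg_def)
  also have "\<dots> = integral\<^sup>L (unit_cube K) (copula_marg M X K)"
    by (rule cube_restrict[OF assms(3,4)], rule cm_meas[OF assms(1,2)]) (use assms finite_subset comp_meas in auto)
  finally show ?thesis .
qed

lemma prod_If_half: "finite A \<Longrightarrow> (\<Prod>i\<in>A. if i \<in> K then c else (1::real)) = c ^ card (A \<inter> K)"
  by (simp add: prod.If_cases)

lemma cm_small:
  fixes M :: "'a measure" and X :: "nat \<Rightarrow> 'a \<Rightarrow> real"
  assumes PS: "prob_space M"
    and Xm: "\<And>i. i < n \<Longrightarrow> X i \<in> borel_measurable M"
    and Xd: "\<And>i. i < n \<Longrightarrow> distr M lborel (X i) = uniform_measure lborel {0..1}"
    and K: "K \<subseteq> {..<n}" "card K \<le> 1"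
  shows "integral\<^sup>L (unit_cube {..<n}) (copula_marg M X K) = (1/2) ^ card K"
proof -
  interpret prob_space M by fact
  have fK: "finite K" using K finite_subset by blast
  have eq: "copula_marg M X K u = (\<Prod>i<n. if i \<in> K then 0 + 1 * u i else 1 + 0 * u i)"
    if u: "u \<in> space (unit_cube {..<n})" for u
  proof -
    have ui: "u i \<in> {0..1}" if "i < n" for i
      using PiE_mem[OF u[unfolded space_cube], of i] that by simp
    show ?thesis
    proof (cases "K = {}")
      case True
      then show ?thesis by (simp add: copula_marg_def prob_space)
    next
      case False
      have "card K \<noteq> 0" using False fK by simp
      then have "card K = 1" using K(2) by linarith
      then obtain j where Kj: "K = {j}" by (rule card_1_singletonE)
      then have j: "j < n" using K by auto
      have "(\<Prod>i<n. if i \<in> K then 0 + 1 * u i else 1 + 0 * u i) = u j"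
      proof -
        have "(\<Prod>i<n. if i \<in> K then 0 + 1 * u i else 1 + 0 * u i) = (\<Prod>i<n. if i = j then u i else 1)"
          by (rule prod.cong) (auto simp: Kj)
        also have "\<dots> = u j" using j by simp
        finally show ?thesis .
      qed
      moreover have "copula_marg M X K u = u j"
        unfolding copula_marg_def Kj using unif_le(1)[OF Xm[OF j] Xd[OF j] ui[OF j]] by simp
      ultimately show ?thesis by simp
    qed
  qed
  have "integral\<^sup>L (unit_cube {..<n}) (copula_marg M X K) =
        (\<integral>u. (\<Prod>i<n. (\<lambda>t. if i \<in> K then 0 + 1 * t else 1 + 0 * t) (u i)) \<partial>unit_cube {..<n})"
    by (rule Bochner_Integration.integral_cong) (use eq in auto)
  also have "\<dots> = (\<Prod>i<n. integral\<^sup>L R01 (\<lambda>t. if i \<in> K then 0 + 1 * t else 1 + 0 * t))"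
    by (rule cube_prod) (auto intro!: integrable_R01[where B=1])
  also have "\<dots> = (\<Prod>i<n. if i \<in> K then 1/2 else 1)"
    by (intro prod.cong refl) (auto simp: int_R01_poly[of 0 1, simplified] int_R01_poly[of 1 0, simplified])
  also have "\<dots> = (1/2) ^ card K"
    using K by (subst prod_If_half) (auto simp: Int_absorb1)
  finally show ?thesis .
qed



lemma cube_prod_integrable:
  fixes f :: "nat \<Rightarrow> real \<Rightarrow> real"
  assumes "finite K" "\<And>i. i \<in> K \<Longrightarrow> integrable R01 (f i)"
  shows "integrable (unit_cube K) (\<lambda>u. \<Prod>i\<in>K. f i (u i))"
proof -
  interpret product_sigma_finite "\<lambda>_. R01" by (rule psf_R01)
  show ?thesis unfolding unit_cube_def by (rule product_integrable_prod[OF assms])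
qed

lemma pow_gt: "m \<ge> 2 \<Longrightarrow> (2::real) ^ m > real m + 1"
proof (induct m rule: nat_induct_at_least)
  case base then show ?case by simp
next
  case (Suc m) then show ?case by simp
qed

lemma alg0: fixes d k x c :: real assumes "d \<noteq> 0" "k \<noteq> 0" "c \<noteq> 0"
  shows "d / (c * k) * (k / d * x) = x / c"
  using assms by (simp add: field_simps)
lemma alg:
  fixes L r c :: real and m :: nat
  assumes "c > 0" "c - (real m + 1) \<noteq> 0" "r = (real m + 1) / (c - (real m + 1)) * (c * L - 1)"
  shows "L = (c - (real m + 1)) / (c * (real m + 1)) * r + 1 / c"
proof -
  have h: "real m + 1 \<noteq> 0" by linarith
  have "(c - (real m + 1)) / (c * (real m + 1)) * r = (c * L - 1) / c"
    unfolding assms(3) by (rule alg0) (use h assms(1,2) in auto)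
  then show ?thesis using assms(1) by (simp add: field_simps)
qed

lemma sumhalf:
  fixes J :: "nat set"
  assumes "finite J"
  shows "(\<Sum>S\<in>Pow J. (-1) ^ card S * (1/2::real) ^ (k + card S)) = (1/2) ^ (k + card J)"
proof -
  have "(\<Prod>j\<in>J. 1 - (1/2::real)) = (\<Sum>S\<in>Pow J. (-1) ^ card S * (\<Prod>j\<in>S. 1/2))"
    by (rule prod_1_minus[OF assms])
  then have "(1/2::real) ^ card J = (\<Sum>S\<in>Pow J. (-1) ^ card S * (1/2) ^ card S)"
    by simp
  then have "(1/2::real) ^ k * (1/2) ^ card J = (\<Sum>S\<in>Pow J. (-1) ^ card S * (1/2) ^ (k + card S))"
    by (simp add: sum_distrib_left power_add mult.left_commute)
  then show ?thesis by (simp add: power_add)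
qed

theorem mainTheorem3:
  fixes M :: "'a measure" and X :: "nat \<Rightarrow> 'a \<Rightarrow> real"
    and n :: nat and \<alpha> :: "nat \<Rightarrow> real"
  assumes "n \<ge> 2"
    and "prob_space M"
    and "\<And>i. i < n \<Longrightarrow> X i \<in> borel_measurable M"
    and "\<And>i. i < n \<Longrightarrow> distr M lborel (X i) = uniform_measure lborel {0..1}"
    and "\<And>i. i < n \<Longrightarrow> \<alpha> i \<in> {-1, 1}"
  shows "rho_alpha M X n \<alpha> =
    (2^n * (real n + 1)) / (2^n - (real n + 1)) *
    (\<Sum>S \<in> Pow {i. i < n \<and> \<alpha> i = 1}.
       (let I = {i. i < n \<and> \<alpha> i = -1}; m = card I + card S in
        if m \<le> 1 then 0
        else (-1) ^ card S * ((2 ^ m - (real m + 1)) / (2 ^ m * (real m + 1)))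
             * rho_minus M X (I \<union> S)))"
proof -
  interpret prob_space M by fact
  define I where "I = {i. i < n \<and> \<alpha> i = -1}"
  define J where "J = {i. i < n \<and> \<alpha> i = 1}"
  define P where "P u = (\<Prod>i<n. if \<alpha> i = -1 then u i else 1 - u i)" for u :: "nat \<Rightarrow> real"
  define L where "L K = integral\<^sup>L (unit_cube {..<n}) (copula_marg M X K)" for K
  define T where "T S = (if card I + card S \<le> 1 then 0
        else (-1) ^ card S * ((2 ^ (card I + card S) - (real (card I + card S) + 1)) /
          (2 ^ (card I + card S) * (real (card I + card S) + 1))) * rho_minus M X (I \<union> S))" for S
  have fin: "finite I" "finite J" unfolding I_def J_def by auto
  have IJ: "I \<inter> J = {}" "I \<union> J = {..<n}" using assms(5) unfolding I_def J_def by force+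
  have cardIJ: "card I + card J = n" using card_Un_disjoint[OF fin IJ(1)] IJ(2) by simp
  have ISsub: "I \<union> S \<subseteq> {..<n}" if "S \<in> Pow J" for S using that IJ by auto
  have cardIS: "card (I \<union> S) = card I + card S" if "S \<in> Pow J" for S
  proof -
    have "finite S" using that fin finite_subset by auto
    then show ?thesis using card_Un_disjoint[OF fin(1)] that IJ by auto
  qed
  have Xm: "X i \<in> borel_measurable M" if "S \<in> Pow J" "i \<in> I \<union> S" for i S
    using assms(3) ISsub that by auto
  have Qeq: "Q_alpha M X n \<alpha> u = (\<Sum>S\<in>Pow J. (-1) ^ card S * copula_marg M X (I \<union> S) u) - P u"
    if u: "u \<in> space (unit_cube {..<n})" for u
  proof -
    have ui: "u i \<in> {0..1}" if "i < n" for i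
      using PiE_mem[OF u[unfolded space_cube], of i] that by simp
    show ?thesis
      using Q_pointwise[OF assms(2,3,4,5) ui] unfolding I_def J_def P_def by simp
  qed
  have iS: "integrable (unit_cube {..<n}) (copula_marg M X (I \<union> S))" if "S \<in> Pow J" for S
    by (rule cm_integrable[OF assms(2) Xm[OF that] ISsub[OF that]]) auto
  define f :: "nat \<Rightarrow> real \<Rightarrow> real" where "f = (\<lambda>i t. (if \<alpha> i = -1 then 0 else 1) + (if \<alpha> i = -1 then 1 else -1) * t)"
  have Pf: "P u = (\<Prod>i<n. f i (u i))" for u
    unfolding P_def f_def by (rule prod.cong) auto
  have fi: "integrable R01 (f i)" for i
    unfolding f_def by (rule integrable_R01[where B=2]) auto
  have iP: "integrable (unit_cube {..<n}) P"
    unfolding Pf by (rule cube_prod_integrable) (auto intro: fi)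
  have intP: "integral\<^sup>L (unit_cube {..<n}) P = (1/2) ^ n"
  proof -
    have "integral\<^sup>L (unit_cube {..<n}) P = (\<Prod>i<n. integral\<^sup>L R01 (f i))"
      unfolding Pf by (rule cube_prod) (auto intro: fi)
    also have "\<dots> = (\<Prod>i<n. 1/2)"
      by (rule prod.cong) (auto simp: f_def int_R01_poly)
    finally show ?thesis by simp
  qed
  have intQ: "integral\<^sup>L (unit_cube {..<n}) (Q_alpha M X n \<alpha>)
      = (\<Sum>S\<in>Pow J. (-1) ^ card S * L (I \<union> S)) - (1/2) ^ n"
  proof -
    have "integral\<^sup>L (unit_cube {..<n}) (Q_alpha M X n \<alpha>)
      = integral\<^sup>L (unit_cube {..<n}) (\<lambda>u. (\<Sum>S\<in>Pow J. (-1) ^ card S * copula_marg M X (I \<union> S) u) - P u)"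
      by (rule Bochner_Integration.integral_cong) (simp_all add: Qeq)
    also have "\<dots> = integral\<^sup>L (unit_cube {..<n}) (\<lambda>u. (\<Sum>S\<in>Pow J. (-1) ^ card S * copula_marg M X (I \<union> S) u))
        - integral\<^sup>L (unit_cube {..<n}) P"
      by (rule Bochner_Integration.integral_diff)
         (auto intro!: Bochner_Integration.integrable_sum integrable_mult_right iS iP)
    also have "integral\<^sup>L (unit_cube {..<n}) (\<lambda>u. (\<Sum>S\<in>Pow J. (-1) ^ card S * copula_marg M X (I \<union> S) u))
        = (\<Sum>S\<in>Pow J. (-1) ^ card S * L (I \<union> S))"
      by (subst Bochner_Integration.integral_sum) (auto intro!: integrable_mult_right iS simp: L_def)
    finally show ?thesis using intP by simp
  qed
  have termS: "(-1) ^ card S * L (I \<union> S) = T S + (-1) ^ card S * (1/2) ^ (card I + card S)"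
    if S: "S \<in> Pow J" for S
  proof (cases "card I + card S \<le> 1")
    case True
    have "L (I \<union> S) = (1/2) ^ (card I + card S)"
      unfolding L_def cardIS[OF S, symmetric]
      by (rule cm_small[OF assms(2,3,4) ISsub[OF S]]) (use True cardIS[OF S] in auto)
    then show ?thesis using True by (simp add: T_def)
  next
    case False
    define m where "m = card I + card S"
    have m: "m \<ge> 2" using False m_def by simp
    have cm: "card (I \<union> S) = m" using cardIS[OF S] m_def by simp
    have "L (I \<union> S) = integral\<^sup>L (unit_cube (I \<union> S)) (copula_marg M X (I \<union> S))"
      unfolding L_def by (rule cm_cube[OF assms(2) Xm[OF S] ISsub[OF S]]) auto
    also have "\<dots> = ((2::real) ^ m - (real m + 1)) / (2 ^ m * (real m + 1)) * rho_minus M X (I \<union> S) + 1 / 2 ^ m"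
      by (rule alg) (use pow_gt[OF m] in \<open>auto simp: rho_minus_def cm\<close>)
    finally show ?thesis using False unfolding T_def m_def[symmetric]
      by (simp add: algebra_simps power_one_over)
  qed
  have "integral\<^sup>L (unit_cube {..<n}) (Q_alpha M X n \<alpha>) = (\<Sum>S\<in>Pow J. T S)"
  proof -
    have "(\<Sum>S\<in>Pow J. (-1) ^ card S * L (I \<union> S)) = (\<Sum>S\<in>Pow J. T S) + (\<Sum>S\<in>Pow J. (-1) ^ card S * (1/2::real) ^ (card I + card S))"
      by (simp add: termS sum.distrib)
    also have "(\<Sum>S\<in>Pow J. (-1) ^ card S * (1/2::real) ^ (card I + card S)) = (1/2) ^ n"
      using sumhalf[OF fin(2), of "card I"] cardIJ by simp
    finally show ?thesis using intQ by simp
  qed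
  moreover have "(\<Sum>S\<in>Pow J. T S) = (\<Sum>S \<in> Pow {i. i < n \<and> \<alpha> i = 1}.
       (let I = {i. i < n \<and> \<alpha> i = -1}; m = card I + card S in
        if m \<le> 1 then 0
        else (-1) ^ card S * ((2 ^ m - (real m + 1)) / (2 ^ m * (real m + 1)))
             * rho_minus M X (I \<union> S)))"
    unfolding Let_def I_def[symmetric] J_def[symmetric] T_def ..
  ultimately show ?thesis unfolding rho_alpha_def by simp
qed


end
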